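(* Let $Q$ be a quadratical quasigroup of order $25$ whose elements are ordered in some way. If $Q$ is $k$-translatable with respect to this ordering, with $1\le k<25$, then $k=7$ or $k=18$.
   Context: A quadratical quasigroup is a quasigroup satisfying $xy\cdot x=zx\cdot yz$ for all $x,y,z$ (equivalently, a groupoid satisfying $x\cdot x=x$, $yx\cdot xy=x$, $xy\cdot zw=xz\cdot yw$). A finite groupoid with ordering $q_1,\dots,q_n$ is $k$-translatable ($1\le k<n$) with respect to this ordering if $q_i\cdot q_j=q_{i-1}\cdot q_{j-k}$ for all $i\in\{2,\dots,n\}$, $j\in\{1,\dots,n\}$, indices taken modulo $n$ in $\{1,\dots,n\}$. *)

theory Defs
  imports Main
begin

definition quasigroup :: "('a \<Rightarrow> 'a \<Rightarrow> 'a) \<Rightarrow> bool" where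
  "quasigroup m \<longleftrightarrow> (\<forall>a b. (\<exists>!x. m a x = b) \<and> (\<exists>!y. m y a = b))"

definition quadratical :: "('a \<Rightarrow> 'a \<Rightarrow> 'a) \<Rightarrow> bool" where
  "quadratical m \<longleftrightarrow> quasigroup m \<and> (\<forall>x y z. m (m x y) x = m (m z x) (m y z))"

definition idx :: "nat \<Rightarrow> int \<Rightarrow> nat" where
  "idx n x = nat ((x - 1) mod int n) + 1"

definition ordering_of :: "nat \<Rightarrow> (nat \<Rightarrow> 'a) \<Rightarrow> bool" where
  "ordering_of n q \<longleftrightarrow> bij_betw q {1..n} (UNIV :: 'a set)"

definition k_translatable :: "nat \<Rightarrow> ('a \<Rightarrow> 'a \<Rightarrow> 'a) \<Rightarrow> (nat \<Rightarrow> 'a) \<Rightarrow> nat \<Rightarrow> bool" where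
  "k_translatable n m q k \<longleftrightarrow> 1 \<le> k \<and> k < n \<and>
     (\<forall>i\<in>{2..n}. \<forall>j\<in>{1..n}.
        m (q i) (q j) = m (q (i - 1)) (q (idx n (int j - int k))))"

end

theory Submission imports Defs begin
lemma idx_eq: "idx 25 t = nat ((t - 1) mod 25) + 1"
  by (simp add: idx_def)
lemma idx_inj: "idx 25 t = idx 25 t' \<Longrightarrow> t mod 25 = t' mod 25"
proof -
  assume "idx 25 t = idx 25 t'"
  then have "(t-1) mod 25 = (t'-1) mod 25" by (simp add: idx_eq)
  from mod_add_cong[OF this, of 1 1] show ?thesis by simp
qed
lemma idx_mod: "t mod 25 = t' mod 25 \<Longrightarrow> idx 25 t = idx 25 t'"
  unfolding idx_eq by (metis mod_diff_cong)
lemma idx_range: "idx 25 t \<in> {1..25}"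
  unfolding idx_eq by auto
lemma idx_nat: "1 \<le> i \<Longrightarrow> i \<le> 25 \<Longrightarrow> idx 25 (int i) = i"
  unfolding idx_eq by (subst mod_pos_pos_trivial) auto
lemma idx_modeq: "int (idx 25 u) mod 25 = u mod 25"
proof -
  have "int (idx 25 u) = (u - 1) mod 25 + 1" unfolding idx_eq by simp
  then show ?thesis by (metis diff_add_cancel mod_add_left_eq)
qed
lemma idx_pred: "idx 25 t \<ge> 2 \<Longrightarrow> idx 25 (t-1) = idx 25 t - 1"
proof -
  assume a: "idx 25 t \<ge> 2"
  define r where "r = (t-1) mod 25"
  have r: "1 \<le> r" "r < 25" using a unfolding idx_eq r_def by auto
  have "(t-1-1) mod 25 = (r - 1) mod 25" unfolding r_def by (metis mod_diff_left_eq)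
  also have "\<dots> = r - 1" using r by simp
  finally show ?thesis using r unfolding idx_eq r_def by (simp add: nat_diff_distrib)
qed
lemma idx_sub: "idx 25 (int (idx 25 u) - int k) = idx 25 (u - int k)"
  by (rule idx_mod) (metis idx_modeq mod_diff_left_eq)
lemma enum: "1 \<le> (k::nat) \<Longrightarrow> k < 25 \<Longrightarrow> k = 1 \<or> k = 2 \<or> k = 3 \<or> k = 4 \<or> k = 5 \<or> k = 6 \<or> k = 7 \<or> k = 8 \<or> k = 9 \<or> k = 10 \<or> k = 11 \<or> k = 12 \<or> k = 13 \<or> k = 14 \<or> k = 15 \<or> k = 16 \<or> k = 17 \<or> k = 18 \<or> k = 19 \<or> k = 20 \<or> k = 21 \<or> k = 22 \<or> k = 23 \<or> k = 24"
  by presburger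
lemma cinvA: "1 \<le> (k::nat) \<Longrightarrow> k < 25 \<Longrightarrow> \<not> 5 dvd (1 - int k) \<Longrightarrow> ((1 - int k) * (1 - int k)^19) mod 25 = 1"
  by (drule (1) enum) (elim disjE; simp)
lemma finA: "1 \<le> (k::nat) \<Longrightarrow> k < 25 \<Longrightarrow> (1 + int k ^ 2) mod 25 = 0 \<Longrightarrow> k = 7 \<or> k = 18"
  by (drule (1) enum) (elim disjE; simp)

theorem corollary8p18:
  fixes m :: "'a::finite \<Rightarrow> 'a \<Rightarrow> 'a" and q :: "nat \<Rightarrow> 'a" and k :: nat
  assumes "card (UNIV :: 'a set) = 25"
    and "quadratical m"
    and "ordering_of 25 q"
    and "1 \<le> k" and "k < 25"
    and "k_translatable 25 m q k"
  shows "k = 7 \<or> k = 18"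
proof -
  have qg: "quasigroup m" and quad: "\<And>x y z. m (m x y) x = m (m z x) (m y z)"
    using assms(2) unfolding quadratical_def by auto
  have lc: "\<And>a x y. m a x = m a y \<Longrightarrow> x = y"
  proof -
    fix a x y assume "m a x = m a y"
    moreover have "\<exists>!z. m a z = m a y" using qg unfolding quasigroup_def by blast
    ultimately show "x = y" by blast
  qed
  have idem: "\<And>x. m x x = x"
  proof -
    fix x
    have "m (m x x) x = m (m x x) (m x x)" using quad[of x x x] .
    from lc[OF this] show "m x x = x" by simp
  qed
  have qid: "\<And>x z. m (m z x) (m x z) = x"
  proof -
    fix x z
    have "m (m x x) x = m (m z x) (m x z)" by (rule quad)
    then show "m (m z x) (m x z) = x" by (simp add: idem)
  qed
  have bij: "bij_betw q {1..25} UNIV" using assms(3) unfolding ordering_of_def by simp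
  define \<phi> where "\<phi> t = q (idx 25 t)" for t
  have \<phi>cong: "\<And>t t'. t mod 25 = t' mod 25 \<Longrightarrow> \<phi> t = \<phi> t'"
    unfolding \<phi>_def using idx_mod by metis
  have \<phi>inj: "\<And>t t'. \<phi> t = \<phi> t' \<Longrightarrow> t mod 25 = t' mod 25"
  proof -
    fix t t' assume "\<phi> t = \<phi> t'"
    then have "idx 25 t = idx 25 t'"
      using inj_onD[OF bij_betw_imp_inj_on[OF bij] _ idx_range idx_range] unfolding \<phi>_def by blast
    then show "t mod 25 = t' mod 25" by (rule idx_inj)
  qed
  have tr: "\<And>t u. t mod 25 \<noteq> 1 \<Longrightarrow> m (\<phi> t) (\<phi> u) = m (\<phi> (t-1)) (\<phi> (u - int k))"
  proof -
    fix t u :: int assume t: "t mod 25 \<noteq> 1"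
    define i where "i = idx 25 t"
    define j where "j = idx 25 u"
    have "i \<noteq> 1"
    proof
      assume "i = 1"
      then have "idx 25 t = idx 25 1" unfolding i_def by (simp add: idx_def)
      from idx_inj[OF this] show False using t by simp
    qed
    then have i: "i \<in> {2..25}" using idx_range[of t] unfolding i_def by auto
    have j: "j \<in> {1..25}" using idx_range[of u] unfolding j_def by auto
    have "m (q i) (q j) = m (q (i - 1)) (q (idx 25 (int j - int k)))"
      using assms(6) i j unfolding k_translatable_def by blast
    moreover have "i - 1 = idx 25 (t - 1)" using idx_pred[of t] i unfolding i_def by simp
    moreover have "idx 25 (int j - int k) = idx 25 (u - int k)" unfolding j_def by (rule idx_sub)
    ultimately show "m (\<phi> t) (\<phi> u) = m (\<phi> (t-1)) (\<phi> (u - int k))"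
      unfolding \<phi>_def i_def j_def by simp
  qed
  have rows: "\<forall>u. m (\<phi> (1 + int n)) (\<phi> u) = m (\<phi> 1) (\<phi> (u - int n * int k))" if "n \<le> 24" for n
    using that
  proof (induction n)
    case 0
    then show ?case by simp
  next
    case (Suc n)
    show ?case
    proof
      fix u
      have "(1 + int (Suc n)) mod 25 \<noteq> 1"
      proof (cases "n = 23")
        case False
        then have "(1 + int (Suc n)) mod 25 = 1 + int (Suc n)" using Suc.prems by (intro mod_pos_pos_trivial) auto
        then show ?thesis by simp
      qed simp
      then have "m (\<phi> (1 + int (Suc n))) (\<phi> u) = m (\<phi> (1 + int (Suc n) - 1)) (\<phi> (u - int k))"
        by (rule tr)
      also have "\<dots> = m (\<phi> (1 + int n)) (\<phi> (u - int k))" by simp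
      also have "\<dots> = m (\<phi> 1) (\<phi> (u - int k - int n * int k))" using Suc by simp
      also have "u - int k - int n * int k = u - int (Suc n) * int k" by (simp add: algebra_simps)
      finally show "m (\<phi> (1 + int (Suc n))) (\<phi> u) = m (\<phi> 1) (\<phi> (u - int (Suc n) * int k))" .
    qed
  qed
  define G where "G s = m (\<phi> 1) (\<phi> s)" for s
  have Gcong: "\<And>s s'. s mod 25 = s' mod 25 \<Longrightarrow> G s = G s'"
  proof -
    fix s s' :: int assume "s mod 25 = s' mod 25"
    then have "\<phi> s = \<phi> s'" by (rule \<phi>cong)
    then show "G s = G s'" unfolding G_def by simp
  qed
  have gen: "\<And>t u. m (\<phi> t) (\<phi> u) = G (u - (t - 1) * int k)"
  proof -
    fix t u :: int
    define n where "n = nat ((t - 1) mod 25)"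
    have nn: "int n = (t - 1) mod 25" unfolding n_def by simp
    have "n \<le> 24" unfolding n_def by simp
    have "\<phi> t = \<phi> (1 + int n)"
    proof (rule \<phi>cong)
      have "(1 + int n) mod 25 = (1 + (t - 1)) mod 25" unfolding nn by (simp only: mod_add_right_eq)
      then show "t mod 25 = (1 + int n) mod 25" by simp
    qed
    moreover have "G (u - int n * int k) = G (u - (t - 1) * int k)"
    proof (rule Gcong)
      have "(u - (t-1) mod 25 * int k) mod 25 = (u - ((t-1) mod 25 * int k) mod 25) mod 25"
        by (simp only: mod_diff_right_eq)
      also have "\<dots> = (u - ((t-1) * int k) mod 25) mod 25" by (simp only: mod_mult_left_eq)
      also have "\<dots> = (u - (t-1) * int k) mod 25" by (simp only: mod_diff_right_eq)
      finally show "(u - int n * int k) mod 25 = (u - (t - 1) * int k) mod 25" unfolding nn .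
    qed
    ultimately show "m (\<phi> t) (\<phi> u) = G (u - (t - 1) * int k)"
      using rows[OF \<open>n \<le> 24\<close>] unfolding G_def by simp
  qed
  define H where "H s = G (s + int k)" for s
  have Hcong: "\<And>s s'. s mod 25 = s' mod 25 \<Longrightarrow> H s = H s'"
    unfolding H_def by (intro Gcong mod_add_cong) simp_all
  have Hid: "\<And>t. \<phi> t = H ((1 - int k) * t)"
  proof -
    fix t
    have "\<phi> t = G (t - (t - 1) * int k)" using gen[of t t] idem by simp
    also have "t - (t - 1) * int k = (1 - int k) * t + int k" by (simp add: algebra_simps)
    finally show "\<phi> t = H ((1 - int k) * t)" unfolding H_def .
  qed
  have n5: "\<not> 5 dvd (1 - int k)"
  proof
    assume "5 dvd (1 - int k)"
    then obtain a where "1 - int k = 5 * a" by blast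
    then have "((1 - int k) * 5) mod 25 = ((1 - int k) * 0) mod 25" by simp
    then have "H ((1 - int k) * 5) = H ((1 - int k) * 0)" by (rule Hcong)
    then have "\<phi> 5 = \<phi> 0" using Hid[of 5] Hid[of 0] by simp
    from \<phi>inj[OF this] show False by simp
  qed
  define c where "c = (1 - int k) ^ 19"
  have cinv: "((1 - int k) * c) mod 25 = 1"
    using cinvA[OF assms(4,5) n5] unfolding c_def by simp
  have Hc: "\<And>s. H s = \<phi> (c * s)"
  proof -
    fix s
    have "((1 - int k) * (c * s)) mod 25 = (((1 - int k) * c) mod 25 * s) mod 25"
      by (simp only: mult.assoc[symmetric] mod_mult_left_eq)
    also have "\<dots> = s mod 25" using cinv by simp
    finally have "H ((1 - int k) * (c * s)) = H s" by (rule Hcong)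
    then show "H s = \<phi> (c * s)" using Hid[of "c * s"] by simp
  qed
  have mult: "\<And>z x. m (\<phi> z) (\<phi> x) = \<phi> (c * (x - z * int k))"
  proof -
    fix z x
    have "m (\<phi> z) (\<phi> x) = G (x - (z - 1) * int k)" by (rule gen)
    also have "\<dots> = H (x - z * int k)" unfolding H_def by (simp add: algebra_simps)
    finally show "m (\<phi> z) (\<phi> x) = \<phi> (c * (x - z * int k))" using Hc by simp
  qed
  have "m (m (\<phi> 1) (\<phi> 0)) (m (\<phi> 0) (\<phi> 1)) = \<phi> 0" by (rule qid)
  then have "\<phi> (c * (c * (1 - 0 * int k) - c * (0 - 1 * int k) * int k)) = \<phi> 0"
    by (simp only: mult)
  from \<phi>inj[OF this] have "(c * (c * (1 - 0 * int k) - c * (0 - 1 * int k) * int k)) mod 25 = 0"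
    by simp
  then have d: "25 dvd (c^2 * (1 + int k ^ 2))" by (simp add: algebra_simps power2_eq_square dvd_eq_mod_eq_0)
  define e where "e = (1 - int k) * c"
  define X where "X = 1 + int k ^ 2"
  have eX: "e^2 * X = (1 - int k)^2 * (c^2 * X)" unfolding e_def by (simp add: power_mult_distrib)
  have "25 dvd (e^2 * X)" unfolding eX using d unfolding X_def by (rule dvd_mult)
  then have m0: "(e^2 * X) mod 25 = 0" by (rule dvd_imp_mod_0)
  have e1: "e mod 25 = 1" using cinv unfolding e_def .
  have "e^2 mod 25 = (e mod 25)^2 mod 25" by (simp only: power_mod)
  also have "\<dots> = 1" using e1 by simp
  finally have e2: "e^2 mod 25 = 1" .
  have "(e^2 * X) mod 25 = ((e^2 mod 25) * X) mod 25" by (simp only: mod_mult_left_eq)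
  also have "\<dots> = X mod 25" by (simp only: e2 mult_1)
  finally have "X mod 25 = 0" using m0 by simp
  then have "(1 + int k ^ 2) mod 25 = 0" unfolding X_def .
  from finA[OF assms(4,5) this] show ?thesis .
qed
end
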